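(* Let $\alpha\in[0,1]$ be irrational with continued fraction denominators $(q_n)_{n\ge1}$. There exists a set $S_\alpha\subset[0,1]$ of full Lebesgue measure such that for every $\beta\in S_\alpha$, with continued fraction denominators $(q'_n)_{n\ge1}$, there exists a sequence $(n_j)_{j\ge1}$ such that either $\lim_{j\to\infty}M_{n_j}=\infty$ or $\lim_{j\to\infty}N_{n_j}=\infty$, where for each $k$, $\sigma(k)$ is the index with $q'_{\sigma(k)}<q_k<q'_{\sigma(k)+1}$, $\eta(k)$ is the index with $q_{\eta(k)}<q'_k<q_{\eta(k)+1}$, and $$M_k=\max_{r:\,q'_{\sigma(k)}<q_r<q'_{\sigma(k)+1}}\min\Big\{\frac{q_r}{q'_{\sigma(k)}},\frac{q'_{\sigma(k)+1}}{q_r}\Big\},\qquad N_k=\max_{r:\,q_{\eta(k)}<q'_r<q_{\eta(k)+1}}\min\Big\{\frac{q'_r}{q_{\eta(k)}},\frac{q_{\eta(k)+1}}{q'_r}\Big\}.$$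
   Context: Continued fraction denominators of an irrational $\gamma=[c_0;c_1,\dots]$: $q_0=1$, $q_1=c_1$, $q_n=c_nq_{n-1}+q_{n-2}$. *)

theory Defs
  imports "HOL-Analysis.Analysis"
begin

fun cf_rem :: "real \<Rightarrow> nat \<Rightarrow> real" where
  "cf_rem x 0 = x"
| "cf_rem x (Suc n) = 1 / frac (cf_rem x n)"

definition cf_digit :: "real \<Rightarrow> nat \<Rightarrow> real" where
  "cf_digit x n = of_int \<lfloor>cf_rem x n\<rfloor>"

fun cf_denom :: "real \<Rightarrow> nat \<Rightarrow> real" where
  "cf_denom x 0 = 1"
| "cf_denom x (Suc 0) = cf_digit x 1"
| "cf_denom x (Suc (Suc n)) = cf_digit x (Suc (Suc n)) * cf_denom x (Suc n) + cf_denom x n"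

definition cf_sigma_ex :: "(nat \<Rightarrow> real) \<Rightarrow> (nat \<Rightarrow> real) \<Rightarrow> nat \<Rightarrow> bool" where
  "cf_sigma_ex q q' k = (\<exists>s\<ge>1. q' s < q k \<and> q k < q' (Suc s))"

definition cf_sigma :: "(nat \<Rightarrow> real) \<Rightarrow> (nat \<Rightarrow> real) \<Rightarrow> nat \<Rightarrow> nat" where
  "cf_sigma q q' k = (THE s. s \<ge> 1 \<and> q' s < q k \<and> q k < q' (Suc s))"

text \<open>M_k for the pair (q, q'); N_k is obtained by swapping the roles.\<close>
definition cf_M :: "(nat \<Rightarrow> real) \<Rightarrow> (nat \<Rightarrow> real) \<Rightarrow> nat \<Rightarrow> real" where
  "cf_M q q' k = (let s = cf_sigma q q' k in
     Max {min (q r / q' s) (q' (Suc s) / q r) | r. r \<ge> 1 \<and> q' s < q r \<and> q r < q' (Suc s)})"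

end

theory Submission
  imports Defs
begin

definition Tg :: "real \<Rightarrow> real" where "Tg y = frac (1 / y)"

lemma frac_cf_rem: "frac (cf_rem x n) = (Tg ^^ n) (frac x)"
  by (induction n) (auto simp: Tg_def)

lemma cf_digit_Suc: "cf_digit x (Suc n) = of_int \<lfloor>1 / (Tg ^^ n) (frac x)\<rfloor>"
  by (simp add: cf_digit_def frac_cf_rem)

lemma irr_inverse: assumes "(y::real) \<notin> \<rat>" shows "1 / y \<notin> \<rat>"
proof
  assume "1 / y \<in> \<rat>"
  then have "1 / (1 / y) \<in> \<rat>" by (rule Rats_divide[OF Rats_1])
  then show False using assms by simp
qed

lemma irr_frac: assumes "(y::real) \<notin> \<rat>" shows "frac y \<notin> \<rat>"
proof
  assume "frac y \<in> \<rat>"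
  then have "frac y + of_int \<lfloor>y\<rfloor> \<in> \<rat>" by (rule Rats_add[OF _ Rats_of_int])
  then show False using assms by (simp add: frac_def)
qed

lemma cf_rem_irr: assumes "x \<notin> \<rat>" shows "cf_rem x n \<notin> \<rat>"
proof (induction n)
  case 0 then show ?case using assms by simp
next
  case (Suc n) then show ?case using irr_inverse[OF irr_frac[OF Suc]] by simp
qed

lemma frac_irr_pos: assumes "(y::real) \<notin> \<rat>" shows "0 < frac y"
proof (rule ccontr)
  assume "\<not> 0 < frac y"
  then have "frac y = 0" using frac_ge_0[of y] by linarith
  then have "y \<in> \<int>" by (simp add: frac_eq_0_iff)
  then obtain k where "y = of_int k" by (auto elim: Ints_cases)
  then show False using assms by simp
qed

lemma cf_rem_Suc_gt1:
  assumes "x \<notin> \<rat>" shows "cf_rem x (Suc n) > 1"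
proof -
  have "0 < frac (cf_rem x n)" "frac (cf_rem x n) < 1"
    using frac_irr_pos[OF cf_rem_irr[OF assms]] frac_lt_1 by auto
  then show ?thesis by simp
qed

lemma cf_digit_ge1:
  assumes "x \<notin> \<rat>" "n \<ge> 1" shows "cf_digit x n \<ge> 1"
proof -
  obtain m where "n = Suc m" using assms(2) by (cases n) auto
  then show ?thesis using cf_rem_Suc_gt1[OF assms(1), of m]
    by (simp add: cf_digit_def)
qed

lemma cf_digit_le_rem: "cf_digit x n \<le> cf_rem x n"
  by (simp add: cf_digit_def)

lemma cf_denom_pos: "x \<notin> \<rat> \<Longrightarrow> cf_denom x n \<ge> 1"
proof (induction x n rule: cf_denom.induct)
  case (1 x) then show ?case by simp
next
  case (2 x) then show ?case using cf_digit_ge1[of x 1] by simp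
next
  case (3 x n)
  have "cf_digit x (Suc (Suc n)) \<ge> 1" using cf_digit_ge1[OF 3(3), of "Suc (Suc n)"] by simp
  then have "cf_digit x (Suc (Suc n)) * cf_denom x (Suc n) \<ge> 1"
  proof -
    have "1 * 1 \<le> cf_digit x (Suc (Suc n)) * cf_denom x (Suc n)"
      by (rule mult_mono) (use 3 \<open>cf_digit x (Suc (Suc n)) \<ge> 1\<close> in auto)
    then show ?thesis by simp
  qed
  moreover have "cf_denom x n \<ge> 1" using 3 by blast
  ultimately show ?case unfolding cf_denom.simps by linarith
qed

lemma cf_denom_step: assumes "x \<notin> \<rat>" "n \<ge> 1" shows "cf_denom x (Suc n) \<ge> cf_denom x n + 1"
proof -
  obtain m where m: "n = Suc m" using assms(2) by (cases n) auto
  have d: "cf_digit x (Suc (Suc m)) \<ge> 1" using cf_digit_ge1[OF assms(1), of "Suc (Suc m)"] by simp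
  have p1: "cf_denom x (Suc m) \<ge> 1" by (rule cf_denom_pos[OF assms(1)])
  have p2: "cf_denom x m \<ge> 1" by (rule cf_denom_pos[OF assms(1)])
  have "cf_digit x (Suc (Suc m)) * cf_denom x (Suc m) \<ge> cf_denom x (Suc m)"
    using mult_right_mono[OF d, of "cf_denom x (Suc m)"] p1 by linarith
  then show ?thesis unfolding m cf_denom.simps using p2 by linarith
qed

lemma cf_denom_ge_n: assumes "x \<notin> \<rat>" shows "cf_denom x n \<ge> real n"
proof (induction n)
  case 0 then show ?case using cf_denom_pos[OF assms, of 0] by simp
next
  case (Suc n)
  show ?case
  proof (cases "n = 0")
    case True then show ?thesis using cf_denom_pos[OF assms, of 1] by simp
  next
    case False then have "n \<ge> 1" by simp
    then show ?thesis using cf_denom_step[OF assms, of n] Suc.IH by simp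
  qed
qed

lemma cf_denom_mono_strict: assumes "x \<notin> \<rat>" "1 \<le> m" "m < n" shows "cf_denom x m < cf_denom x n"
  using assms(3)
proof (induction n)
  case 0 then show ?case by simp
next
  case (Suc n)
  have n1: "1 \<le> n" using assms(2) Suc.prems by linarith
  have st: "cf_denom x (Suc n) \<ge> cf_denom x n + 1" using cf_denom_step[OF assms(1) n1] .
  show ?case
  proof (cases "m = n")
    case True show ?thesis unfolding True using st by linarith
  next
    case False then have "m < n" using Suc.prems by simp
    then show ?thesis using Suc.IH st by linarith
  qed
qed

lemma cf_denom_mono: assumes "x \<notin> \<rat>" "1 \<le> m" "m \<le> n" shows "cf_denom x m \<le> cf_denom x n"
proof (cases "m = n")
  case True then show ?thesis by simp
next
  case False then have "m < n" using assms(3) by simp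
  then show ?thesis using cf_denom_mono_strict[OF assms(1,2)] less_imp_le by blast
qed

lemma cf_denom_Suc_ge: assumes "x \<notin> \<rat>" shows "cf_denom x (Suc n) \<ge> cf_digit x (Suc n) * cf_denom x n"
proof (cases n)
  case 0 then show ?thesis by simp
next
  case (Suc m)
  have "cf_denom x m \<ge> 1" using cf_denom_pos[OF assms, of m] .
  then show ?thesis unfolding Suc cf_denom.simps by linarith
qed

lemma cf_denom_Suc_le: assumes "x \<notin> \<rat>" "n \<ge> 1"
  shows "cf_denom x (Suc n) \<le> (cf_digit x (Suc n) + 1) * cf_denom x n"
proof -
  obtain m where m: "n = Suc m" using assms(2) by (cases n) auto
  have "cf_denom x m \<le> cf_denom x (Suc m)"
  proof (cases m)
    case 0 then show ?thesis using cf_denom_pos[OF assms(1), of 1] by simp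
  next
    case (Suc k) then show ?thesis using cf_denom_mono[OF assms(1), of m "Suc m"] by simp
  qed
  then show ?thesis unfolding m cf_denom.simps by (simp add: algebra_simps)
qed

lemma cf_denom_int: "cf_denom x n \<in> \<int>"
proof (induction x n rule: cf_denom.induct)
  case (1 x) then show ?case by simp
next
  case (2 x) then show ?case by (simp add: cf_digit_def)
next
  case (3 x n) then show ?case unfolding cf_denom.simps cf_digit_def by (intro Ints_add Ints_mult) auto
qed

fun cf_num :: "real \<Rightarrow> nat \<Rightarrow> real" where
  "cf_num x 0 = 0"
| "cf_num x (Suc 0) = 1"
| "cf_num x (Suc (Suc n)) = cf_digit x (Suc (Suc n)) * cf_num x (Suc n) + cf_num x n"

lemma cf_num_int: "cf_num x n \<in> \<int>"
proof (induction x n rule: cf_num.induct)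
  case (3 x n) then show ?case unfolding cf_num.simps cf_digit_def by (intro Ints_add Ints_mult) auto
qed auto

lemma cf_det: "cf_num x (Suc n) * cf_denom x n - cf_num x n * cf_denom x (Suc n) = (-1) ^ n"
proof (induction n)
  case 0 then show ?case by simp
next
  case (Suc n)
  have "cf_num x (Suc (Suc n)) * cf_denom x (Suc n) - cf_num x (Suc n) * cf_denom x (Suc (Suc n))
     = - (cf_num x (Suc n) * cf_denom x n - cf_num x n * cf_denom x (Suc n))"
    by (simp add: algebra_simps)
  then show ?case using Suc.IH by simp
qed

lemma cf_rem_rel: assumes "x \<notin> \<rat>"
  shows "cf_rem x (Suc n) = cf_digit x (Suc n) + 1 / cf_rem x (Suc (Suc n))"
proof -
  have "frac (cf_rem x (Suc n)) \<noteq> 0" using frac_irr_pos[OF cf_rem_irr[OF assms]] by (metis less_irrefl)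
  then have "1 / cf_rem x (Suc (Suc n)) = frac (cf_rem x (Suc n))" by simp
  then show ?thesis by (simp add: cf_digit_def frac_def)
qed

lemma key_aux:
  fixes x X Y a q1 q0 p1 p0 :: real
  assumes "Y > 0" "X = a + 1 / Y" "x * (q1 * X + q0) = p1 * X + p0"
  shows "x * ((a * q1 + q0) * Y + q1) = (a * p1 + p0) * Y + p1"
proof -
  have XY: "X * Y = a * Y + 1" using assms(1,2) by (simp add: field_simps)
  have "x * ((a * q1 + q0) * Y + q1) = x * (q1 * (X * Y) + q0 * Y)" by (simp add: XY algebra_simps)
  also have "\<dots> = Y * (x * (q1 * X + q0))" by (simp add: algebra_simps)
  also have "\<dots> = Y * (p1 * X + p0)" using assms(3) by simp
  also have "\<dots> = p1 * (X * Y) + p0 * Y" by (simp add: algebra_simps)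
  also have "\<dots> = (a * p1 + p0) * Y + p1" by (simp add: XY algebra_simps)
  finally show ?thesis .
qed

lemma abs_aux: fixes A D :: real assumes "A * D = - ((-1) ^ m)" "D > 0" shows "\<bar>A\<bar> * D = 1"
proof -
  have "\<bar>A * D\<bar> = 1" unfolding assms(1) by (simp add: power_abs)
  then show ?thesis using assms(2) by (simp add: abs_mult)
qed

lemma cf_key: assumes "x \<notin> \<rat>" "0 < x" "x < 1"
  shows "x * (cf_denom x (Suc n) * cf_rem x (Suc (Suc n)) + cf_denom x n)
       = cf_num x (Suc n) * cf_rem x (Suc (Suc n)) + cf_num x n"
proof (induction n)
  case 0
  have fx: "frac x = x" using assms by (simp add: frac_eq)
  let ?X = "cf_rem x 2"
  have X: "?X = 1 / frac (1 / x)" using fx by (simp add: numeral_2_eq_2)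
  have xpos: "frac (1/x) > 0" using frac_irr_pos[OF irr_inverse[OF assms(1)]] .
  have Xpos: "?X > 0" using X xpos by simp
  have a1: "cf_digit x 1 = 1/x - 1/?X" using X fx by (simp add: cf_digit_def frac_def)
  have "x * (cf_digit x 1 * ?X + 1) = ?X"
    unfolding a1 using assms(2) Xpos by (simp add: field_simps del: cf_rem.simps)
  then show ?case by (simp add: numeral_2_eq_2)
next
  case (Suc n)
  let ?X = "cf_rem x (Suc (Suc n))" and ?Y = "cf_rem x (Suc (Suc (Suc n)))"
  have rel: "?X = cf_digit x (Suc (Suc n)) + 1 / ?Y" using cf_rem_rel[OF assms(1)] .
  have Ypos: "?Y > 1" using cf_rem_Suc_gt1[OF assms(1)] .
  have "x * ((cf_digit x (Suc (Suc n)) * cf_denom x (Suc n) + cf_denom x n) * ?Y + cf_denom x (Suc n))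
     = (cf_digit x (Suc (Suc n)) * cf_num x (Suc n) + cf_num x n) * ?Y + cf_num x (Suc n)"
    by (rule key_aux[OF _ rel Suc.IH]) (use Ypos in linarith)
  then show ?case by (simp only: cf_denom.simps cf_num.simps)
qed

lemma cf_dioph: assumes "x \<notin> \<rat>" "0 < x" "x < 1"
  shows "\<exists>p. p \<in> \<int> \<and> \<bar>cf_denom x n * x - p\<bar> \<le> 1 / cf_denom x (Suc n)"
proof (cases n)
  case 0
  have a1: "cf_digit x 1 \<le> 1 / x" using cf_digit_le_rem[of x 1] assms by (simp add: frac_eq)
  have "cf_digit x 1 \<ge> 1" using cf_digit_ge1[OF assms(1)] by simp
  then have "x \<le> 1 / cf_digit x 1" using a1 assms(2) by (simp add: field_simps)
  then show ?thesis using 0 assms(2) by (intro exI[of _ 0]) simp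
next
  case (Suc m)
  have X1: "cf_rem x (Suc (Suc m)) > 1" using cf_rem_Suc_gt1[OF assms(1)] .
  have key: "x * (cf_denom x (Suc m) * cf_rem x (Suc (Suc m)) + cf_denom x m) = cf_num x (Suc m) * cf_rem x (Suc (Suc m)) + cf_num x m"
    using cf_key[OF assms] .
  have dg: "cf_digit x (Suc (Suc m)) \<le> cf_rem x (Suc (Suc m))" by (rule cf_digit_le_rem)
  define X where "X = cf_rem x (Suc (Suc m))"
  define q1 where "q1 = cf_denom x (Suc m)"
  define q0 where "q0 = cf_denom x m"
  define p1 where "p1 = cf_num x (Suc m)"
  define p0 where "p0 = cf_num x m"
  define a where "a = cf_digit x (Suc (Suc m))"
  note defs = q1_def q0_def p1_def p0_def a_def
  have q1: "q1 \<ge> 1" "q0 \<ge> 1" using cf_denom_pos[OF assms(1)] unfolding defs by auto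
  have det: "p1 * q0 - p0 * q1 = (-1) ^ m" using cf_det[of x m] unfolding defs by simp
  have q2: "cf_denom x (Suc (Suc m)) = a * q1 + q0" unfolding defs by simp
  have X1': "X > 1" using X1 unfolding X_def .
  have key': "x * (q1 * X + q0) = p1 * X + p0" using key unfolding X_def defs .
  have dg': "a \<le> X" using dg unfolding X_def defs .
  have "q1 * X > 0" using q1 X1' by (intro mult_pos_pos) auto
  then have Dpos: "q1 * X + q0 > 0" using q1 by linarith
  have "(q1 * x - p1) * (q1 * X + q0) = q1 * (x * (q1 * X + q0)) - p1 * (q1 * X + q0)"
    by (simp only: left_diff_distrib mult.assoc)
  also have "\<dots> = q1 * p0 - p1 * q0" unfolding key' by (simp add: algebra_simps)
  also have "\<dots> = - (p1 * q0 - p0 * q1)" by (simp add: mult.commute)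
  also have "\<dots> = - ((-1) ^ m)" using det by simp
  finally have e: "\<bar>q1 * x - p1\<bar> * (q1 * X + q0) = 1" using Dpos by (rule abs_aux)
  have "a * q1 \<le> X * q1" using dg' q1 by (intro mult_right_mono) auto
  then have le: "a * q1 + q0 \<le> q1 * X + q0" by (simp add: mult.commute)
  have a1: "a \<ge> 1" using cf_digit_ge1[OF assms(1), of "Suc (Suc m)"] unfolding a_def by simp
  have "a * q1 > 0" using a1 q1 by (intro mult_pos_pos) auto
  then have pos2: "a * q1 + q0 > 0" using q1 by linarith
  have "1 / (q1 * X + q0) \<le> 1 / (a * q1 + q0)" using le pos2 by (intro divide_left_mono) auto
  moreover have "\<bar>q1 * x - p1\<bar> = 1 / (q1 * X + q0)" using e Dpos by (simp add: field_simps)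
  ultimately have "\<bar>q1 * x - p1\<bar> \<le> 1 / cf_denom x (Suc (Suc m))" unfolding q2 by simp
  then show ?thesis using Suc cf_num_int unfolding defs by blast
qed

lemma subst_branch:
  fixes k :: real and h :: "real \<Rightarrow> real"
  assumes k: "k \<ge> 1" and hm[measurable]: "h \<in> borel_measurable borel"
  shows "(\<integral>\<^sup>+y. ennreal (h (1/y - k) * indicator {1/(k+1)..1/k} y) \<partial>lborel)
       = (\<integral>\<^sup>+t. ennreal (h t / (k+t)^2 * indicator {0..1} t) \<partial>lborel)"
proof -
  define g where "g = (\<lambda>y::real. k + 1 - 1/y)"
  define g' where "g' = (\<lambda>y::real. 1 / y^2)"
  define F where "F = (\<lambda>u::real. h (1 - u) / (k + 1 - u)^2)"
  have Fm[measurable]: "F \<in> borel_measurable borel" unfolding F_def by measurable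
  have ga: "g (1/(k+1)) = 0" unfolding g_def using k by simp
  have gb: "g (1/k) = 1" unfolding g_def using k by simp
  have pos: "x > 0" if "x \<in> {1/(k+1)..1/k}" for x
    using that k by (smt (verit) atLeastAtMost_iff divide_pos_pos)
  have sub: "(\<integral>\<^sup>+x. F x * indicator {g (1/(k+1))..g (1/k)} x \<partial>lborel) =
             (\<integral>\<^sup>+x. F (g x) * g' x * indicator {1/(k+1)..1/k} x \<partial>lborel)"
  proof (rule nn_integral_substitution)
    show "set_borel_measurable borel {g (1 / (k + 1))..g (1 / k)} F"
      unfolding set_borel_measurable_def by measurable
    show "(g has_real_derivative g' x) (at x)" if "x \<in> {1 / (k + 1)..1 / k}" for x
      using pos[OF that] unfolding g_def g'_def
      by (auto intro!: derivative_eq_intros simp: power2_eq_square field_simps)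
    show "continuous_on {1 / (k + 1)..1 / k} g'"
      unfolding g'_def using pos by (intro continuous_intros) auto
    show "0 \<le> g' x" for x unfolding g'_def by simp
    show "1 / (k + 1) \<le> 1 / k" using k by (simp add: field_simps)
  qed
  have rhs: "(\<integral>\<^sup>+x. F (g x) * g' x * indicator {1/(k+1)..1/k} x \<partial>lborel)
      = (\<integral>\<^sup>+y. ennreal (h (1/y - k) * indicator {1/(k+1)..1/k} y) \<partial>lborel)"
  proof (rule nn_integral_cong)
    fix y :: real
    show "ennreal (F (g y) * g' y * indicator {1/(k+1)..1/k} y) = ennreal (h (1/y - k) * indicator {1/(k+1)..1/k} y)"
    proof (cases "y \<in> {1/(k+1)..1/k}")
      case True
      have "y > 0" using pos[OF True] .
      then show ?thesis using True unfolding F_def g_def g'_def by (simp add: field_simps power2_eq_square)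
    next
      case False then show ?thesis by simp
    qed
  qed
  have lhs: "(\<integral>\<^sup>+x. ennreal (F x * indicator {0..1} x) \<partial>lborel)
      = (\<integral>\<^sup>+t. ennreal (h t / (k+t)^2 * indicator {0..1} t) \<partial>lborel)"
  proof -
    have "(\<integral>\<^sup>+x. ennreal (F x * indicator {0..1} x) \<partial>lborel)
        = (\<integral>\<^sup>+x. ennreal (F (1 + (-1) * x) * indicator {0..1} (1 + (-1) * x)) \<partial>lborel)"
      using nn_integral_real_affine[of "\<lambda>x. ennreal (F x * indicator {0..1} x)" "-1" 1] by simp
    also have "\<dots> = (\<integral>\<^sup>+t. ennreal (h t / (k+t)^2 * indicator {0..1} t) \<partial>lborel)"
    proof -
      have "indicator {0..1} (1 + (-1) * x) = (indicator {0..1} x :: real)" for x :: real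
        by (auto simp: indicator_def)
      moreover have "F (1 + (-1) * x) = h x / (k + x)^2" for x unfolding F_def by (simp add: algebra_simps)
      ultimately show ?thesis by simp
    qed
    finally show ?thesis .
  qed
  show ?thesis using sub rhs lhs ga gb by simp
qed

lemma Tg_measurable[measurable]: "Tg \<in> borel_measurable borel"
  unfolding Tg_def frac_def by measurable

lemma branch_floor:
  fixes k :: nat and y :: real
  assumes "k \<ge> 1" "y \<in> {1/(real k+1)<..1/real k}"
  shows "\<lfloor>1/y\<rfloor> = int k" "Tg y = 1/y - k" "y > 0"
proof -
  have yp: "y > 0" using assms by (smt (verit) divide_pos_pos greaterThanAtMost_iff of_nat_0_le_iff)
  have "1/y < real k + 1" using assms yp by (auto simp: field_simps)
  moreover have "real k \<le> 1/y" using assms yp by (auto simp: field_simps)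
  ultimately show fl: "\<lfloor>1/y\<rfloor> = int k" by (simp add: floor_eq_iff)
  then show "Tg y = 1/y - k" by (simp add: Tg_def frac_def)
  show "y > 0" by (rule yp)
qed

lemma branch_W:
  fixes k :: nat and E :: "real set"
  assumes k: "k \<ge> 1" and E[measurable]: "E \<in> sets borel"
  shows "(\<integral>\<^sup>+y. ennreal (indicator E (Tg y) * indicator {1/(real k+1)<..1/real k} y / (1+y)) \<partial>lborel)
       = (\<integral>\<^sup>+t. ennreal (indicator E t * indicator {0..1} t / ((real k+t)*(real k+t+1))) \<partial>lborel)"
proof -
  define h where "h = (\<lambda>t. indicator E t * (real k + t) / (real k + t + 1) :: real)"
  have hm[measurable]: "h \<in> borel_measurable borel" unfolding h_def by measurable
  have k1: "real k \<ge> 1" using k by simp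
  have S: "(\<integral>\<^sup>+y. ennreal (h (1/y - real k) * indicator {1/(real k+1)..1/real k} y) \<partial>lborel)
       = (\<integral>\<^sup>+t. ennreal (h t / (real k+t)^2 * indicator {0..1} t) \<partial>lborel)"
    by (rule subst_branch[OF k1 hm])
  have L: "(\<integral>\<^sup>+y. ennreal (indicator E (Tg y) * indicator {1/(real k+1)<..1/real k} y / (1+y)) \<partial>lborel)
      = (\<integral>\<^sup>+y. ennreal (h (1/y - real k) * indicator {1/(real k+1)..1/real k} y) \<partial>lborel)"
  proof (rule nn_integral_cong_AE)
    show "AE y in lborel. ennreal (indicator E (Tg y) * indicator {1/(real k+1)<..1/real k} y / (1+y))
       = ennreal (h (1/y - real k) * indicator {1/(real k+1)..1/real k} y)"
      using AE_lborel_singleton[of "1/(real k+1)"]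
    proof eventually_elim
      case (elim y)
      show ?case
      proof (cases "y \<in> {1/(real k+1)<..1/real k}")
        case True
        note bf = branch_floor[OF k True]
        have "(1/y) / (1/y + 1) = 1 / (1 + y)" using bf(3) by (simp add: field_simps)
        then show ?thesis using True bf unfolding h_def by (auto simp: indicator_def)
      next
        case False
        then have "y \<notin> {1/(real k+1)..1/real k}" using elim by auto
        then show ?thesis using False by simp
      qed
    qed
  qed
  have R: "(\<integral>\<^sup>+t. ennreal (h t / (real k+t)^2 * indicator {0..1} t) \<partial>lborel)
      = (\<integral>\<^sup>+t. ennreal (indicator E t * indicator {0..1} t / ((real k+t)*(real k+t+1))) \<partial>lborel)"
  proof (rule nn_integral_cong)
    fix t :: real
    show "ennreal (h t / (real k+t)^2 * indicator {0..1} t) = ennreal (indicator E t * indicator {0..1} t / ((real k+t)*(real k+t+1)))"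
    proof (cases "t \<in> {0..1}")
      case True
      then have X: "real k + t > 0" using k1 by auto
      have e: "X / (X + 1) / X^2 = 1 / (X * (X + 1))" if "X > 0" for X :: real
        using that by (simp add: power2_eq_square divide_simps)
      have "h t / (real k+t)^2 * indicator {0..1} t
          = indicator E t * indicator {0..1} t * ((real k + t) / (real k + t + 1) / (real k + t)^2)"
        unfolding h_def by (simp add: field_simps)
      also have "\<dots> = indicator E t * indicator {0..1} t / ((real k+t)*(real k+t+1))"
        using e[OF X] by (simp add: add.assoc)
      finally show ?thesis by simp
    next
      case False then show ?thesis by simp
    qed
  qed
  show ?thesis using L S R by simp
qed

fun Eb :: "nat \<Rightarrow> nat \<Rightarrow> real set" where
  "Eb B 0 = UNIV"
| "Eb B (Suc n) = {y. \<lfloor>1/y\<rfloor> \<le> int B \<and> Tg y \<in> Eb B n}"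

lemma Eb_sets[measurable]: "Eb B n \<in> sets borel"
proof (induction n)
  case 0 then show ?case by simp
next
  case (Suc n)
  have [measurable]: "Eb B n \<in> sets borel" by (rule Suc)
  show ?case by simp measurable
qed

definition W :: "real set \<Rightarrow> ennreal" where
  "W E = (\<integral>\<^sup>+y. ennreal (indicator E y * indicator {0..1} y / (1+y)) \<partial>lborel)"

lemma telescope: fixes t :: real assumes "t \<ge> 0"
  shows "(\<Sum>k\<in>{1..B}. 1/((real k + t)*(real k + t + 1))) = 1/(1+t) - 1/(real B + 1 + t)"
proof (induction B)
  case 0 then show ?case by simp
next
  case (Suc B)
  have "(\<Sum>k\<in>{1..Suc B}. 1/((real k + t)*(real k + t + 1)))
      = (\<Sum>k\<in>{1..B}. 1/((real k + t)*(real k + t + 1))) + 1/((real B + 1 + t)*(real B + 1 + t + 1))"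
    by (simp add: add.commute)
  also have "\<dots> = 1/(1+t) - 1/(real B + 1 + t) + 1/((real B + 1 + t)*(real B + 1 + t + 1))"
    using Suc by simp
  also have "\<dots> = 1/(1+t) - 1/(real (Suc B) + 1 + t)"
  proof -
    have e: "1/(X*(X+1)) = 1/X - 1/(X+1)" if "X>0" for X::real using that by (simp add: divide_simps)
    have "real B + 1 + t > 0" using assms by simp
    from e[OF this] show ?thesis by (simp add: add.commute add.left_commute)
  qed
  finally show ?case .
qed

lemma tel_ineq: fixes t b :: real assumes "0 \<le> t" "0 \<le> b"
  shows "1/(1+t) - 1/(b + 1 + t) \<le> (b + 1) / (b + 2) * (1/(1+t))"
proof -
  have "1/(1+t) - 1/(b + 1 + t) = b / ((1+t)*(b+1+t))" using assms by (simp add: divide_simps)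
  also have "\<dots> = (b / (b+1+t)) * (1/(1+t))" by simp
  also have "\<dots> \<le> ((b + 1) / (b + 2)) * (1/(1+t))"
  proof (rule mult_right_mono)
    have "b * (b+2) \<le> (b+1) * (b+1+t)" using assms by (simp add: algebra_simps)
    then show "b / (b+1+t) \<le> (b + 1) / (b + 2)" using assms by (simp add: divide_simps)
  qed (use assms in simp)
  finally show ?thesis .
qed

lemma W_contract:
  shows "W (Eb B (Suc n)) \<le> ennreal ((real B + 1) / (real B + 2)) * W (Eb B n)"
proof -
  let ?br = "\<lambda>k::nat. {1/(real k+1)<..1/real k}"
  let ?f = "\<lambda>k y. ennreal (indicator (Eb B n) (Tg y) * indicator (?br k) y / (1+y))"
  have fm[measurable]: "?f k \<in> borel_measurable borel" for k by measurable
  have "W (Eb B (Suc n)) \<le> (\<integral>\<^sup>+y. (\<Sum>k\<in>{1..B}. ?f k y) \<partial>lborel)"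
    unfolding W_def
  proof (rule nn_integral_mono_AE)
    show "AE y in lborel. ennreal (indicator (Eb B (Suc n)) y * indicator {0..1} y / (1+y)) \<le> (\<Sum>k\<in>{1..B}. ?f k y)"
      using AE_lborel_singleton[of 0]
    proof eventually_elim
      case (elim y)
      show ?case
      proof (cases "y \<in> Eb B (Suc n) \<and> y \<in> {0..1}")
        case True
        then have y: "0 < y" "y \<le> 1" "\<lfloor>1/y\<rfloor> \<le> int B" "Tg y \<in> Eb B n" using elim by auto
        define k where "k = nat \<lfloor>1/y\<rfloor>"
        have "1/y \<ge> 1" using y by simp
        then have fl: "\<lfloor>1/y\<rfloor> \<ge> 1" by (simp add: le_floor_iff)
        have kk: "real k = of_int \<lfloor>1/y\<rfloor>" "k \<ge> 1" "k \<le> B" unfolding k_def using y fl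
          by (auto simp: le_nat_iff)
        have "real k \<le> 1/y" "1/y < real k + 1" using kk(1) by linarith+
        then have "real k * y \<le> 1" "1 < (real k + 1) * y"
          using y(1) by (simp_all add: pos_le_divide_eq pos_divide_less_eq)
        moreover have "real k > 0" using kk(2) by simp
        ultimately have "y \<le> 1/real k" "1/(real k + 1) < y"
          by (simp_all add: pos_le_divide_eq pos_divide_less_eq mult.commute)
        then have "y \<in> ?br k" by simp
        then have "?f k y = ennreal (indicator (Eb B (Suc n)) y * indicator {0..1} y / (1+y))"
          using True y by simp
        moreover have "k \<in> {1..B}" using kk by simp
        ultimately show ?thesis by (metis (no_types, lifting) finite_atLeastAtMost member_le_sum zero_le)
      next
        case False then show ?thesis by (auto simp: indicator_def)
      qed
    qed
  qed
  also have "\<dots> = (\<Sum>k\<in>{1..B}. \<integral>\<^sup>+y. ?f k y \<partial>lborel)"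
    by (rule nn_integral_sum) auto
  also have "\<dots> = (\<Sum>k\<in>{1..B}. \<integral>\<^sup>+t. ennreal (indicator (Eb B n) t * indicator {0..1} t / ((real k+t)*(real k+t+1))) \<partial>lborel)"
    by (rule sum.cong) (auto intro: branch_W)
  also have "\<dots> = (\<integral>\<^sup>+t. (\<Sum>k\<in>{1..B}. ennreal (indicator (Eb B n) t * indicator {0..1} t / ((real k+t)*(real k+t+1)))) \<partial>lborel)"
    by (rule nn_integral_sum[symmetric]) auto
  also have "\<dots> \<le> (\<integral>\<^sup>+t. ennreal ((real B + 1) / (real B + 2)) * ennreal (indicator (Eb B n) t * indicator {0..1} t / (1+t)) \<partial>lborel)"
  proof (rule nn_integral_mono)
    fix t :: real
    show "(\<Sum>k\<in>{1..B}. ennreal (indicator (Eb B n) t * indicator {0..1} t / ((real k+t)*(real k+t+1))))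
       \<le> ennreal ((real B + 1) / (real B + 2)) * ennreal (indicator (Eb B n) t * indicator {0..1} t / (1+t))"
    proof (cases "t \<in> {0..1}")
      case False then show ?thesis by simp
    next
      case True
      let ?i = "indicator (Eb B n) t :: real"
      have i: "?i \<ge> 0" by simp
      have "(\<Sum>k\<in>{1..B}. ennreal (?i * indicator {0..1} t / ((real k+t)*(real k+t+1))))
          = ennreal (\<Sum>k\<in>{1..B}. ?i * (1 / ((real k+t)*(real k+t+1))))"
        using True by (subst sum_ennreal) (auto intro!: divide_nonneg_nonneg)
      also have "\<dots> = ennreal (?i * (\<Sum>k\<in>{1..B}. 1 / ((real k+t)*(real k+t+1))))"
        by (simp only: sum_distrib_left)
      also have "\<dots> = ennreal (?i * (1/(1+t) - 1/(real B + 1 + t)))"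
        using telescope[of t B] True by simp
      also have "\<dots> \<le> ennreal (((real B + 1) / (real B + 2)) * (?i / (1+t)))"
      proof (rule ennreal_leI)
        have "1/(1+t) - 1/(real B + 1 + t) \<le> ((real B + 1) / (real B + 2)) * (1 / (1+t))"
          using True by (intro tel_ineq) auto
        then have "?i * (1/(1+t) - 1/(real B + 1 + t)) \<le> ?i * (((real B + 1) / (real B + 2)) * (1 / (1+t)))"
          using i by (rule mult_left_mono)
        then show "?i * (1/(1+t) - 1/(real B + 1 + t)) \<le> ((real B + 1) / (real B + 2)) * (?i / (1+t))"
          by (simp add: algebra_simps)
      qed
      also have "\<dots> = ennreal (((real B + 1) / (real B + 2)) * (?i * indicator {0..1} t / (1+t)))"
        using True by simp
      also have "\<dots> = ennreal ((real B + 1) / (real B + 2)) * ennreal (?i * indicator {0..1} t / (1+t))"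
        by (rule ennreal_mult) (use True in auto)
      finally show ?thesis .
    qed
  qed
  also have "\<dots> = ennreal ((real B + 1) / (real B + 2)) * W (Eb B n)"
    unfolding W_def by (rule nn_integral_cmult) measurable
  finally show ?thesis .
qed

lemma W_mono: assumes "A \<subseteq> B" shows "W A \<le> W B"
  unfolding W_def using assms
  by (intro nn_integral_mono ennreal_leI) (auto simp: indicator_def)

lemma W_UNIV: "W UNIV \<le> 1"
proof -
  have "W UNIV \<le> (\<integral>\<^sup>+y. indicator {0..1::real} y \<partial>lborel)"
    unfolding W_def by (intro nn_integral_mono) (auto simp: indicator_def)
  also have "\<dots> = 1" by simp
  finally show ?thesis .
qed

lemma W_Eb: "W (Eb B n) \<le> ennreal (((real B + 1) / (real B + 2)) ^ n)"
proof (induction n)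
  case 0 then show ?case using W_UNIV by simp
next
  case (Suc n)
  have "W (Eb B (Suc n)) \<le> ennreal ((real B + 1) / (real B + 2)) * W (Eb B n)" by (rule W_contract)
  also have "\<dots> \<le> ennreal ((real B + 1) / (real B + 2)) * ennreal (((real B + 1) / (real B + 2)) ^ n)"
    by (rule mult_left_mono[OF Suc]) simp
  also have "\<dots> = ennreal (((real B + 1) / (real B + 2)) ^ Suc n)"
    by (simp add: ennreal_mult[symmetric])
  finally show ?case .
qed

definition Bad :: "nat \<Rightarrow> real set" where "Bad B = (\<Inter>n. Eb B n)"

lemma Bad_sets[measurable]: "Bad B \<in> sets borel"
  unfolding Bad_def by measurable

lemma W_Bad: "W (Bad B) = 0"
proof -
  let ?c = "(real B + 1) / (real B + 2)"
  have "(\<lambda>n. ?c ^ n) \<longlonglongrightarrow> 0" by (rule LIMSEQ_power_zero) auto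
  then have "(\<lambda>n. ennreal (?c ^ n)) \<longlonglongrightarrow> ennreal 0" by (rule tendsto_ennrealI)
  moreover have "W (Bad B) \<le> ennreal (?c ^ n)" for n
  proof -
    have "Bad B \<subseteq> Eb B n" unfolding Bad_def by auto
    then show ?thesis by (rule order_trans[OF W_mono W_Eb])
  qed
  ultimately have "W (Bad B) \<le> ennreal 0"
    by (intro LIMSEQ_le_const) auto
  then show ?thesis by simp
qed

lemma W_zero_null: assumes [measurable]: "N \<in> sets borel" and "W N = 0"
  shows "N \<inter> {0..1} \<in> null_sets lborel"
proof -
  have "AE y in lborel. ennreal (indicator N y * indicator {0..1} y / (1+y)) = 0"
    using assms(2) unfolding W_def by (subst nn_integral_0_iff_AE[symmetric]) auto
  then have "AE y in lborel. y \<notin> N \<inter> {0..1}"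
  proof eventually_elim
    case (elim y)
    show ?case
    proof
      assume y: "y \<in> N \<inter> {0..1}"
      then have v: "indicator N y * indicator {0..1} y / (1+y) = 1/(1+y)" by simp
      have "ennreal (1/(1+y)) = 0" using elim unfolding v .
      then have "1/(1+y) \<le> 0" by (simp add: ennreal_eq_0_iff)
      moreover have "1/(1+y) > 0" using y by simp
      ultimately show False by linarith
    qed
  qed
  then show ?thesis by (subst AE_iff_null_sets) auto
qed

lemma preimage_null: assumes [measurable]: "N \<in> sets borel" and "W N = 0"
  shows "{y \<in> {0..1}. Tg y \<in> N} \<in> null_sets lborel"
proof -
  let ?br = "\<lambda>k::nat. {1/(real k+1)<..1/real k}"
  have br: "{y \<in> ?br k. Tg y \<in> N} \<in> null_sets lborel" if k: "k \<ge> 1" for k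
  proof -
    have "(\<integral>\<^sup>+y. ennreal (indicator N (Tg y) * indicator (?br k) y / (1+y)) \<partial>lborel)
        = (\<integral>\<^sup>+t. ennreal (indicator N t * indicator {0..1} t / ((real k+t)*(real k+t+1))) \<partial>lborel)"
      by (rule branch_W[OF k]) simp
    also have "\<dots> \<le> W N"
      unfolding W_def
    proof (intro nn_integral_mono ennreal_leI)
      fix t :: real
      show "indicator N t * indicator {0..1} t / ((real k+t)*(real k+t+1)) \<le> indicator N t * indicator {0..1} t / (1+t)"
      proof (cases "t \<in> N \<and> t \<in> {0..1}")
        case True
        then have "1 + t \<le> (real k+t)*(real k+t+1)" using k
          by (smt (verit, ccfv_threshold) atLeastAtMost_iff mult_le_cancel_right1 of_nat_1 of_nat_le_iff)
        then show ?thesis using True by (simp add: frac_le)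
      next
        case False then show ?thesis by (auto simp: indicator_def)
      qed
    qed
    finally have "(\<integral>\<^sup>+y. ennreal (indicator N (Tg y) * indicator (?br k) y / (1+y)) \<partial>lborel) = 0"
      using assms(2) by simp
    then have "AE y in lborel. ennreal (indicator N (Tg y) * indicator (?br k) y / (1+y)) = 0"
      by (subst nn_integral_0_iff_AE[symmetric]) auto
    then have "AE y in lborel. y \<notin> {y \<in> ?br k. Tg y \<in> N}"
    proof eventually_elim
      case (elim y)
      show ?case
      proof
        assume y: "y \<in> {y \<in> ?br k. Tg y \<in> N}"
        have "y > 0" using y k by (smt (verit) divide_pos_pos greaterThanAtMost_iff mem_Collect_eq of_nat_0_le_iff)
        then have v: "indicator N (Tg y) * indicator (?br k) y / (1+y) = 1/(1+y)" using y by simp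
        have "ennreal (1/(1+y)) = 0" using elim unfolding v .
        then have "1/(1+y) \<le> 0" by (simp add: ennreal_eq_0_iff)
        moreover have "1/(1+y) > 0" using \<open>y > 0\<close> by simp
        ultimately show False by linarith
      qed
    qed
    then show ?thesis by (subst AE_iff_null_sets) auto
  qed
  have U: "(\<Union>k\<in>{1..}. {y \<in> ?br k. Tg y \<in> N}) \<in> null_sets lborel"
    using br by (intro null_sets_UN') auto
  have sub: "{y \<in> {0..1}. Tg y \<in> N} \<subseteq> {0} \<union> (\<Union>k\<in>{1..}. {y \<in> ?br k. Tg y \<in> N})"
  proof
    fix y assume y: "y \<in> {y \<in> {0..1}. Tg y \<in> N}"
    show "y \<in> {0} \<union> (\<Union>k\<in>{1..}. {y \<in> ?br k. Tg y \<in> N})"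
    proof (cases "y = 0")
      case False
      then have yp: "0 < y" "y \<le> 1" using y by auto
      define k where "k = nat \<lfloor>1/y\<rfloor>"
      have "1/y \<ge> 1" using yp by simp
      then have fl: "\<lfloor>1/y\<rfloor> \<ge> 1" by (simp add: le_floor_iff)
      have k1: "real k = of_int \<lfloor>1/y\<rfloor>" unfolding k_def using fl by (intro of_nat_nat) linarith
      have "(1::real) \<le> of_int \<lfloor>1/y\<rfloor>" using fl by (metis of_int_1 of_int_le_iff)
      then have "real k \<ge> 1" using k1 by linarith
      then have "k \<ge> 1" by simp
      note kk = k1 this
      have "real k \<le> 1/y" "1/y < real k + 1" using kk(1) by linarith+
      then have "real k * y \<le> 1" "1 < (real k + 1) * y"
        using yp(1) by (simp_all add: pos_le_divide_eq pos_divide_less_eq)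
      moreover have "real k > 0" using kk(2) by simp
      ultimately have "y \<le> 1/real k" "1/(real k + 1) < y"
        by (simp_all add: pos_le_divide_eq pos_divide_less_eq mult.commute)
      then show ?thesis using y kk(2) by auto
    qed simp
  qed
  have nul: "{0} \<union> (\<Union>k\<in>{1..}. {y \<in> ?br k. Tg y \<in> N}) \<in> null_sets lborel"
    using U by (intro null_sets.Un) auto
  show ?thesis by (rule null_sets_subset[OF nul _ sub]) measurable
qed

lemma Eb_mem: assumes "\<And>i. \<lfloor>1 / (Tg ^^ i) y\<rfloor> \<le> int B" shows "y \<in> Eb B n"
  using assms
proof (induction n arbitrary: y)
  case 0 then show ?case by simp
next
  case (Suc n)
  have "Tg y \<in> Eb B n"
    by (rule Suc.IH) (metis Suc.prems funpow_Suc_right comp_apply)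
  moreover have "\<lfloor>1 / y\<rfloor> \<le> int B" using Suc.prems[of 0] by simp
  ultimately show ?case by simp
qed

definition Ucov :: "real \<Rightarrow> real \<Rightarrow> real \<Rightarrow> real set" where
  "Ucov X Y D = (\<Union>q\<in>{1..nat \<lfloor>X * D\<rfloor>}. \<Union>p\<in>{- int q..2 * int q}.
      {real_of_int p / real q - D / (real q * Y) .. real_of_int p / real q + D / (real q * Y)})"

lemma Ucov_sets[measurable]: "Ucov X Y D \<in> sets borel"
  unfolding Ucov_def by (intro sets.finite_UN) auto

lemma Ucov_measure:
  assumes "X \<ge> 0" "D \<ge> 0" "Y > 0"
  shows "emeasure lborel (Ucov X Y D) \<le> ennreal (8 * X * D^2 / Y)"
proof -
  let ?N = "nat \<lfloor>X * D\<rfloor>"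
  let ?A = "\<lambda>q p. {real_of_int p / real q - D / (real q * Y) .. real_of_int p / real q + D / (real q * Y)}"
  have "emeasure lborel (Ucov X Y D) \<le> (\<Sum>q\<in>{1..?N}. emeasure lborel (\<Union>p\<in>{- int q..2 * int q}. ?A q p))"
    unfolding Ucov_def by (rule emeasure_subadditive_finite) auto
  also have "\<dots> \<le> (\<Sum>q\<in>{1..?N}. \<Sum>p\<in>{- int q..2 * int q}. emeasure lborel (?A q p))"
    by (intro sum_mono emeasure_subadditive_finite) auto
  also have "\<dots> = (\<Sum>q\<in>{1..?N}. \<Sum>p\<in>{- int q..2 * int q}. ennreal (2 * D / (real q * Y)))"
  proof (intro sum.cong refl)
    fix q p assume q: "q \<in> {1..?N}"
    have "D / (real q * Y) \<ge> 0" using assms q by auto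
    then show "emeasure lborel (?A q p) = ennreal (2 * D / (real q * Y))" by (simp add: mult.commute)
  qed
  also have "\<dots> = (\<Sum>q\<in>{1..?N}. ennreal ((3 * real q + 1) * (2 * D / (real q * Y))))"
  proof (intro sum.cong refl)
    fix q assume q: "q \<in> {1..?N}"
    have c: "card {- int q..2 * int q} = 3 * q + 1" by simp
    have "(\<Sum>p\<in>{- int q..2 * int q}. ennreal (2 * D / (real q * Y))) = of_nat (3 * q + 1) * ennreal (2 * D / (real q * Y))"
      using c by simp
    also have "\<dots> = ennreal (real (3 * q + 1)) * ennreal (2 * D / (real q * Y))"
      by (simp only: ennreal_of_nat_eq_real_of_nat)
    also have "\<dots> = ennreal (real (3 * q + 1) * (2 * D / (real q * Y)))"
      by (rule ennreal_mult[symmetric]) (use assms in auto)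
    also have "\<dots> = ennreal ((3 * real q + 1) * (2 * D / (real q * Y)))" by (simp add: add.commute)
    finally show "(\<Sum>p\<in>{- int q..2 * int q}. ennreal (2 * D / (real q * Y))) = ennreal ((3 * real q + 1) * (2 * D / (real q * Y)))" .
  qed
  also have "\<dots> \<le> (\<Sum>q\<in>{1..?N}. ennreal (8 * D / Y))"
  proof (intro sum_mono ennreal_leI)
    fix q assume q: "q \<in> {1..?N}"
    then have q1: "real q \<ge> 1" by simp
    have "(3 * real q + 1) * (2 * D / (real q * Y)) = ((3 * real q + 1) / real q) * (2 * D / Y)"
      using q1 by (simp add: field_simps)
    also have "\<dots> \<le> 4 * (2 * D / Y)"
    proof (rule mult_right_mono)
      show "(3 * real q + 1) / real q \<le> 4" using q1 by (simp add: divide_simps)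
    qed (use assms in simp)
    finally show "(3 * real q + 1) * (2 * D / (real q * Y)) \<le> 8 * D / Y" by simp
  qed
  also have "\<dots> = of_nat ?N * ennreal (8 * D / Y)" by simp
  also have "\<dots> = ennreal (real ?N) * ennreal (8 * D / Y)"
    by (simp only: ennreal_of_nat_eq_real_of_nat)
  also have "\<dots> = ennreal (real ?N * (8 * D / Y))"
    by (rule ennreal_mult[symmetric]) (use assms in auto)
  also have "\<dots> \<le> ennreal (8 * X * D^2 / Y)"
  proof (rule ennreal_leI)
    have "real ?N \<le> X * D" using assms by (simp add: of_nat_nat)
    then have "real ?N * (8 * D / Y) \<le> (X * D) * (8 * D / Y)"
      by (rule mult_right_mono) (use assms in simp)
    then show "real ?N * (8 * D / Y) \<le> 8 * X * D^2 / Y" by (simp add: power2_eq_square field_simps)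
  qed
  finally show ?thesis .
qed

lemma skip_in_Ucov:
  assumes irr: "x \<notin> \<rat>" and x: "0 < x" "x < 1" and XD: "X * D \<ge> 1" and D: "D > 0" "D \<le> Y"
    and skip: "\<And>m. m \<ge> 1 \<Longrightarrow> \<not> (X * D < cf_denom x m \<and> cf_denom x m < Y / D)"
  shows "x \<in> Ucov X Y D"
proof -
  have ex: "\<exists>m. cf_denom x m > X * D"
    using cf_denom_ge_n[OF irr, of "nat \<lceil>X * D\<rceil> + 1"] by (intro exI[of _ "nat \<lceil>X * D\<rceil> + 1"]) linarith
  define m0 where "m0 = (LEAST m. cf_denom x m > X * D)"
  have m0: "cf_denom x m0 > X * D" unfolding m0_def using LeastI_ex[OF ex] .
  have "m0 \<noteq> 0"
  proof
    assume "m0 = 0"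
    then have "cf_denom x m0 = 1" by simp
    then show False using m0 XD by linarith
  qed
  then obtain k where k: "m0 = Suc k" by (cases m0) auto
  have qk: "cf_denom x k \<le> X * D" using not_less_Least[of k "\<lambda>m. cf_denom x m > X * D"] k unfolding m0_def by force
  have qk1: "cf_denom x (Suc k) \<ge> Y / D" using skip[of "Suc k"] m0 k by force
  obtain p where p: "p \<in> \<int>" "\<bar>cf_denom x k * x - p\<bar> \<le> 1 / cf_denom x (Suc k)"
    using cf_dioph[OF irr x] by blast
  have YD: "Y / D > 0" using D by simp
  have "cf_denom x (Suc k) > 0" using cf_denom_pos[OF irr, of "Suc k"] by linarith
  then have pp: "0 < cf_denom x (Suc k) * (Y / D)" using YD by (rule mult_pos_pos)
  have "1 / cf_denom x (Suc k) \<le> 1 / (Y / D)" by (rule divide_left_mono) (use qk1 pp in auto)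
  then have pb: "\<bar>cf_denom x k * x - p\<bar> \<le> D / Y" using p(2) by simp
  obtain q where q: "cf_denom x k = real q" "q \<ge> 1"
  proof -
    obtain z where z: "cf_denom x k = of_int z" using cf_denom_int[of x k] by (auto elim: Ints_cases)
    have "z \<ge> 1" using cf_denom_pos[OF irr, of k] z by simp
    then show ?thesis using that[of "nat z"] z by simp
  qed
  obtain pz where pz: "p = of_int pz" using p(1) by (auto elim: Ints_cases)
  have qN: "q \<in> {1..nat \<lfloor>X * D\<rfloor>}" using q qk by (simp add: le_nat_floor)
  have DY1: "D / Y \<le> 1" using D by simp
  have "real q * x \<ge> 0" using x by auto
  moreover have "real q * x \<le> real q * 1" using x by (intro mult_left_mono) auto
  ultimately have "real q * x \<ge> 0" "real q * x \<le> real q" by auto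
  then have "of_int pz \<ge> - real q" "of_int pz \<le> 2 * real q"
    using pb DY1 q(2) unfolding q(1) pz by (smt (verit) of_nat_1 of_nat_mono)+
  then have pr: "pz \<in> {- int q..2 * int q}" by simp
  have "\<bar>x - of_int pz / real q\<bar> = \<bar>real q * x - of_int pz\<bar> / real q"
    using q(2) by (simp add: field_simps abs_div_pos[symmetric])
  also have "\<dots> \<le> (D / Y) / real q" using pb q by (intro divide_right_mono) (auto simp: pz)
  finally have "\<bar>x - of_int pz / real q\<bar> \<le> D / (real q * Y)" by (simp add: field_simps)
  then have "x \<in> {real_of_int pz / real q - D / (real q * Y) .. real_of_int pz / real q + D / (real q * Y)}"
    by (simp add: abs_le_iff algebra_simps)
  then show ?thesis unfolding Ucov_def using qN pr by blast
qed

lemma M_lower: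
  fixes Q Q' :: "nat \<Rightarrow> real"
  assumes mono: "\<And>a b. 1 \<le> a \<Longrightarrow> a < b \<Longrightarrow> Q' a < Q' b"
    and grow: "\<And>r. Q r \<ge> real r"
    and s: "s \<ge> 1" "Q' s < Q k" "Q k < Q' (Suc s)" and k: "k \<ge> 1"
  shows "cf_sigma_ex Q Q' k" "cf_M Q Q' k \<ge> min (Q k / Q' s) (Q' (Suc s) / Q k)"
proof -
  show "cf_sigma_ex Q Q' k" unfolding cf_sigma_ex_def using s by blast
  have uniq: "t = s" if t: "t \<ge> 1" "Q' t < Q k" "Q k < Q' (Suc t)" for t
  proof (rule ccontr)
    assume "t \<noteq> s"
    then consider "t < s" | "s < t" by linarith
    then show False
    proof cases
      case 1
      then have le: "Suc t \<le> s" by simp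
      have "Q' (Suc t) \<le> Q' s"
      proof (cases "Suc t = s")
        case True then show ?thesis by simp
      next
        case False then have "Suc t < s" using le by simp
        then show ?thesis using mono[of "Suc t" s] by (simp add: less_imp_le)
      qed
      then show False using t s by linarith
    next
      case 2
      then have le: "Suc s \<le> t" by simp
      have "Q' (Suc s) \<le> Q' t"
      proof (cases "Suc s = t")
        case True then show ?thesis by simp
      next
        case False then have "Suc s < t" using le by simp
        then show ?thesis using mono[of "Suc s" t] by (simp add: less_imp_le)
      qed
      then show False using t s by linarith
    qed
  qed
  have sig: "cf_sigma Q Q' k = s" unfolding cf_sigma_def
  proof (rule the_equality)
    show "s \<ge> 1 \<and> Q' s < Q k \<and> Q k < Q' (Suc s)" using s by blast
  next
    fix t assume "t \<ge> 1 \<and> Q' t < Q k \<and> Q k < Q' (Suc t)"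
    then show "t = s" using uniq by blast
  qed
  let ?S = "{min (Q r / Q' s) (Q' (Suc s) / Q r) | r. r \<ge> 1 \<and> Q' s < Q r \<and> Q r < Q' (Suc s)}"
  have fin: "finite ?S"
  proof -
    have "?S \<subseteq> (\<lambda>r. min (Q r / Q' s) (Q' (Suc s) / Q r)) ` {..nat \<lceil>Q' (Suc s)\<rceil>}"
    proof
      fix z assume "z \<in> ?S"
      then obtain r where r: "z = min (Q r / Q' s) (Q' (Suc s) / Q r)" "Q r < Q' (Suc s)" by blast
      have "real r < Q' (Suc s)" using grow[of r] r(2) by linarith
      then have "r \<le> nat \<lceil>Q' (Suc s)\<rceil>" by linarith
      then show "z \<in> (\<lambda>r. min (Q r / Q' s) (Q' (Suc s) / Q r)) ` {..nat \<lceil>Q' (Suc s)\<rceil>}" using r by auto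
    qed
    then show ?thesis by (rule finite_subset) auto
  qed
  have mem: "min (Q k / Q' s) (Q' (Suc s) / Q k) \<in> ?S" using s k by blast
  show "cf_M Q Q' k \<ge> min (Q k / Q' s) (Q' (Suc s) / Q k)"
    unfolding cf_M_def Let_def sig using Max_ge[OF fin mem] .
qed

lemma filterlim_ge_real: assumes "\<And>j. f j \<ge> real j" shows "filterlim f at_top sequentially"
  by (rule filterlim_at_top_mono[OF filterlim_real_sequentially]) (use assms in auto)

lemma denom_mono': assumes "x \<notin> \<rat>" shows "\<And>a b. 1 \<le> a \<Longrightarrow> a < b \<Longrightarrow> cf_denom x a < cf_denom x b"
  using cf_denom_mono_strict[OF assms] by blast

lemma digits_unbounded:
  assumes irr: "x \<notin> \<rat>" and x: "0 < x" "x < 1" and nb: "\<And>B. Tg x \<notin> Bad B"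
  shows "\<exists>k\<ge>2. cf_digit x k > real B"
proof (rule ccontr)
  assume "\<not> ?thesis"
  then have le: "cf_digit x k \<le> real B" if "k \<ge> 2" for k using that by force
  have "\<lfloor>1 / (Tg ^^ i) (Tg x)\<rfloor> \<le> int B" for i
  proof -
    have "cf_digit x (Suc (Suc i)) = of_int \<lfloor>1 / (Tg ^^ Suc i) (frac x)\<rfloor>" by (rule cf_digit_Suc)
    also have "(Tg ^^ Suc i) (frac x) = (Tg ^^ i) (Tg x)" using x by (simp add: frac_eq funpow_Suc_right del: funpow.simps)
    finally have "of_int \<lfloor>1 / (Tg ^^ i) (Tg x)\<rfloor> \<le> real B" using le[of "Suc (Suc i)"] by simp
    then show ?thesis by linarith
  qed
  then have "Tg x \<in> Eb B n" for n by (rule Eb_mem)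
  then have "Tg x \<in> Bad B" unfolding Bad_def by blast
  then show False using nb by blast
qed

lemma case1:
  assumes irra: "a \<notin> \<rat>" and a: "0 < a" "a < 1" and C: "\<And>r. r \<ge> 1 \<Longrightarrow> cf_digit a r \<le> C"
    and irrb: "b \<notin> \<rat>" and b: "0 < b" "b < 1" and nb: "\<And>B. Tg b \<notin> Bad B"
  shows "\<exists>n :: nat \<Rightarrow> nat. (\<forall>j. n j \<ge> 1 \<and> cf_sigma_ex (cf_denom a) (cf_denom b) (n j)) \<and>
         filterlim (\<lambda>j. cf_M (cf_denom a) (cf_denom b) (n j)) at_top sequentially"
proof -
  have C0: "C \<ge> 1" using C[of 1] cf_digit_ge1[OF irra, of 1] by simp
  have step: "\<exists>r. r \<ge> 1 \<and> cf_sigma_ex (cf_denom a) (cf_denom b) r \<and> cf_M (cf_denom a) (cf_denom b) r \<ge> real j" for j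
  proof -
    define T where "T = real j + 2"
    have T2: "T \<ge> 2" unfolding T_def by simp
    obtain k where k: "k \<ge> 2" "cf_digit b k > real (nat \<lceil>T^2 * (C + 1)\<rceil>)"
      using digits_unbounded[OF irrb b nb] by blast
    have big: "cf_digit b k > T^2 * (C + 1)" using k(2) by linarith
    obtain s where s: "k = Suc s" "s \<ge> 1" using k(1) by (cases k) auto
    have qs: "cf_denom b s \<ge> 1" using cf_denom_pos[OF irrb] .
    have qk: "cf_denom b k \<ge> cf_digit b k * cf_denom b s" using cf_denom_Suc_ge[OF irrb, of s] s by simp
    have ex: "\<exists>r. cf_denom a r \<ge> T * cf_denom b s"
      using cf_denom_ge_n[OF irra, of "nat \<lceil>T * cf_denom b s\<rceil>"] by (intro exI[of _ "nat \<lceil>T * cf_denom b s\<rceil>"]) linarith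
    define r where "r = (LEAST r. cf_denom a r \<ge> T * cf_denom b s)"
    have r1: "cf_denom a r \<ge> T * cf_denom b s" unfolding r_def using LeastI_ex[OF ex] .
    have "T * 1 \<le> T * cf_denom b s" by (rule mult_left_mono) (use qs T2 in auto)
    then have Tq: "T * cf_denom b s \<ge> 2" using T2 by linarith
    have "r \<noteq> 0"
    proof
      assume "r = 0" then show False using r1 Tq by simp
    qed
    then have rge: "r \<ge> 1" by simp
    have r2: "cf_denom a r < T * (C + 1) * cf_denom b s"
    proof (cases "r = 1")
      case True
      have "cf_denom a r \<le> C" using C[of 1] True by simp
      also have "C < T * (C + 1) * 1" using T2 C0 by (smt (verit) mult_le_cancel_right1)
      also have "\<dots> \<le> T * (C + 1) * cf_denom b s" using qs T2 C0 by (intro mult_left_mono) auto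
      finally show ?thesis .
    next
      case False
      then obtain r' where r': "r = Suc r'" "r' \<ge> 1" using rge by (cases r) auto
      have "\<not> cf_denom a r' \<ge> T * cf_denom b s"
        using not_less_Least[of r' "\<lambda>r. cf_denom a r \<ge> T * cf_denom b s"] r' unfolding r_def by force
      then have lt: "cf_denom a r' < T * cf_denom b s" by simp
      have "cf_denom a r \<le> (cf_digit a r + 1) * cf_denom a r'" using cf_denom_Suc_le[OF irra r'(2)] r' by simp
      also have "\<dots> \<le> (C + 1) * cf_denom a r'"
        using C[of r] rge cf_denom_pos[OF irra, of r'] by (intro mult_right_mono) auto
      also have "\<dots> < (C + 1) * (T * cf_denom b s)" using lt C0 by (intro mult_strict_left_mono) auto
      finally show ?thesis by (simp add: algebra_simps)
    qed
    have A: "cf_denom b s < cf_denom a r"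
    proof -
      have "cf_denom b s < T * cf_denom b s" using qs T2 by simp
      then show ?thesis using r1 by linarith
    qed
    have B: "cf_denom a r < cf_denom b (Suc s)"
    proof -
      have "T * (C + 1) * cf_denom b s \<le> T^2 * (C + 1) * cf_denom b s"
        using T2 C0 qs by (intro mult_right_mono) (auto simp: power2_eq_square)
      also have "\<dots> < cf_digit b k * cf_denom b s" using big qs by (intro mult_strict_right_mono) auto
      also have "\<dots> \<le> cf_denom b (Suc s)" using qk s by simp
      finally show ?thesis using r2 by linarith
    qed
    have ml: "cf_sigma_ex (cf_denom a) (cf_denom b) r"
         "cf_M (cf_denom a) (cf_denom b) r \<ge> min (cf_denom a r / cf_denom b s) (cf_denom b (Suc s) / cf_denom a r)"
      using M_lower[OF denom_mono'[OF irrb] cf_denom_ge_n[OF irra] s(2) A B rge] by auto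
    have rpos: "cf_denom a r > 0" using cf_denom_pos[OF irra, of r] by simp
    have m1: "cf_denom a r / cf_denom b s \<ge> T" using r1 qs by (simp add: pos_le_divide_eq)
    have "T * cf_denom a r \<le> cf_denom b (Suc s)"
    proof -
      have "T * cf_denom a r \<le> T * (T * (C + 1) * cf_denom b s)" using r2 T2 by (intro mult_left_mono) auto
      also have "\<dots> = T^2 * (C + 1) * cf_denom b s" by (simp add: power2_eq_square)
      also have "\<dots> \<le> cf_digit b k * cf_denom b s" using big qs by (intro mult_right_mono) auto
      also have "\<dots> \<le> cf_denom b (Suc s)" using qk s by simp
      finally show ?thesis .
    qed
    then have m2: "cf_denom b (Suc s) / cf_denom a r \<ge> T" using rpos by (simp add: pos_le_divide_eq)
    have "cf_M (cf_denom a) (cf_denom b) r \<ge> T" using ml(2) m1 m2 by linarith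
    then show ?thesis using rge ml(1) unfolding T_def by (intro exI[of _ r]) auto
  qed
  then obtain n where n: "\<And>j. n j \<ge> 1 \<and> cf_sigma_ex (cf_denom a) (cf_denom b) (n j) \<and> cf_M (cf_denom a) (cf_denom b) (n j) \<ge> real j"
    by metis
  show ?thesis using n by (intro exI[of _ n]) (auto intro: filterlim_ge_real)
qed

lemma case2:
  assumes irra: "a \<notin> \<rat>" and a: "0 < a" "a < 1"
    and rr: "\<And>j. rr j \<ge> 1 \<and> cf_digit a (Suc (rr j)) \<ge> (real j + 1)^4"
    and irrb: "b \<notin> \<rat>" and b: "0 < b" "b < 1"
    and nb: "b \<notin> (\<Union>J. \<Inter>j\<in>{J..}. Ucov (cf_denom a (rr j)) (cf_denom a (Suc (rr j))) (real j + 1))"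
  shows "\<exists>n :: nat \<Rightarrow> nat. (\<forall>j. n j \<ge> 1 \<and> cf_sigma_ex (cf_denom b) (cf_denom a) (n j)) \<and>
         filterlim (\<lambda>j. cf_M (cf_denom b) (cf_denom a) (n j)) at_top sequentially"
proof -
  have step: "\<exists>m. m \<ge> 1 \<and> cf_sigma_ex (cf_denom b) (cf_denom a) m \<and> cf_M (cf_denom b) (cf_denom a) m \<ge> real J" for J
  proof -
    obtain j where j: "j \<ge> J" "b \<notin> Ucov (cf_denom a (rr j)) (cf_denom a (Suc (rr j))) (real j + 1)"
      using nb by blast
    define X where "X = cf_denom a (rr j)"
    define Y where "Y = cf_denom a (Suc (rr j))"
    define D where "D = real j + 1"
    have X1: "X \<ge> 1" unfolding X_def using cf_denom_pos[OF irra] .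
    have D1: "D \<ge> 1" unfolding D_def by simp
    have dig: "cf_digit a (Suc (rr j)) \<ge> D^4" using rr[of j] unfolding D_def by simp
    have YX: "Y \<ge> D^4 * X"
    proof -
      have "D^4 * X \<le> cf_digit a (Suc (rr j)) * X" using dig X1 by (intro mult_right_mono) auto
      also have "\<dots> \<le> Y" unfolding X_def Y_def by (rule cf_denom_Suc_ge[OF irra])
      finally show ?thesis .
    qed
    have "D^4 \<ge> D" using D1 by (smt (verit) power_increasing power_one_right numeral_le_iff semiring_norm(70) le_numeral_extra(4) one_le_numeral)
    moreover have "D^4 * X \<ge> D^4" using X1 D1 by simp
    ultimately have DY: "D \<le> Y" using YX by linarith
    have XD: "X * D \<ge> 1" using X1 D1 by (smt (verit) mult_le_cancel_left1)
    have "\<not> (\<forall>m. m \<ge> 1 \<longrightarrow> \<not> (X * D < cf_denom b m \<and> cf_denom b m < Y / D))"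
    proof
      assume "\<forall>m. m \<ge> 1 \<longrightarrow> \<not> (X * D < cf_denom b m \<and> cf_denom b m < Y / D)"
      then have "b \<in> Ucov X Y D" using D1 by (intro skip_in_Ucov[OF irrb b XD _ DY]) auto
      then show False using j(2) unfolding X_def Y_def D_def by simp
    qed
    then obtain m where m: "m \<ge> 1" "X * D < cf_denom b m" "cf_denom b m < Y / D" by blast
    have XX: "X \<le> X * D" using X1 D1 by simp
    have A: "X < cf_denom b m" using m XX by linarith
    have "Y / D \<le> Y" using D1 DY X1 by (simp add: divide_le_eq)
    then have B: "cf_denom b m < Y" using m by linarith
    have ml: "cf_sigma_ex (cf_denom b) (cf_denom a) m"
         "cf_M (cf_denom b) (cf_denom a) m \<ge> min (cf_denom b m / X) (Y / cf_denom b m)"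
      using M_lower[OF denom_mono'[OF irra] cf_denom_ge_n[OF irrb], where s = "rr j" and k = m] rr[of j] A B m(1)
      unfolding X_def Y_def by auto
    have qpos: "cf_denom b m > 0" using cf_denom_pos[OF irrb, of m] by simp
    have m1: "cf_denom b m / X \<ge> D" using m(2) X1 by (simp add: pos_le_divide_eq mult.commute)
    have "D * cf_denom b m < Y" using m(3) D1 by (simp add: pos_less_divide_eq mult.commute)
    then have m2: "Y / cf_denom b m \<ge> D" using qpos by (simp add: pos_le_divide_eq)
    have "cf_M (cf_denom b) (cf_denom a) m \<ge> D" using ml(2) m1 m2 by linarith
    then have "cf_M (cf_denom b) (cf_denom a) m \<ge> real J" unfolding D_def using j(1) by linarith
    then show ?thesis using m(1) ml(1) by blast
  qed
  then obtain n where n: "\<And>J. n J \<ge> 1 \<and> cf_sigma_ex (cf_denom b) (cf_denom a) (n J) \<and> cf_M (cf_denom b) (cf_denom a) (n J) \<ge> real J"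
    by metis
  show ?thesis using n by (intro exI[of _ n]) (auto intro: filterlim_ge_real)
qed

lemma Z2_null:
  assumes irra: "a \<notin> \<rat>" and rr: "\<And>j. rr j \<ge> 1 \<and> cf_digit a (Suc (rr j)) \<ge> (real j + 1)^4"
  shows "(\<Union>J. \<Inter>j\<in>{J..}. Ucov (cf_denom a (rr j)) (cf_denom a (Suc (rr j))) (real j + 1)) \<in> null_sets lborel"
proof -
  let ?U = "\<lambda>j. Ucov (cf_denom a (rr j)) (cf_denom a (Suc (rr j))) (real j + 1)"
  have bound: "emeasure lborel (?U j) \<le> ennreal (8 / (real j + 1)^2)" for j
  proof -
    define X where "X = cf_denom a (rr j)"
    define Y where "Y = cf_denom a (Suc (rr j))"
    define D where "D = real j + 1"
    have X1: "X \<ge> 1" unfolding X_def using cf_denom_pos[OF irra] .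
    have D1: "D \<ge> 1" unfolding D_def by simp
    have dig: "cf_digit a (Suc (rr j)) \<ge> D^4" using rr[of j] unfolding D_def by simp
    have YX: "Y \<ge> D^4 * X"
    proof -
      have "D^4 * X \<le> cf_digit a (Suc (rr j)) * X" using dig X1 by (intro mult_right_mono) auto
      also have "\<dots> \<le> Y" unfolding X_def Y_def by (rule cf_denom_Suc_ge[OF irra])
      finally show ?thesis .
    qed
    have "1 \<le> D^4" using D1 by (rule one_le_power)
    then have "1 * 1 \<le> D^4 * X" using X1 by (intro mult_mono) auto
    then have Ypos: "Y > 0" using YX by linarith
    have "emeasure lborel (?U j) \<le> ennreal (8 * X * D^2 / Y)"
      unfolding X_def Y_def D_def using X1 D1 Ypos unfolding X_def Y_def D_def by (intro Ucov_measure) auto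
    also have "\<dots> \<le> ennreal (8 / (real j + 1)^2)"
    proof (rule ennreal_leI)
      have "8 * X * D^2 / Y \<le> 8 * X * D^2 / (D^4 * X)"
      proof (rule divide_left_mono)
        have P: "0 < D^4 * X" using X1 D1 by simp
        show "0 < Y * (D^4 * X)" using mult_pos_pos[OF Ypos P] .
        show "0 \<le> 8 * X * D^2" using X1 by simp
        show "D^4 * X \<le> Y" using YX .
      qed
      also have "\<dots> = 8 / D^2" using X1 D1 by (simp add: field_simps power_def)
      finally show "8 * X * D^2 / Y \<le> 8 / (real j + 1)^2" unfolding D_def .
    qed
    finally show ?thesis .
  qed
  have "(\<Inter>j\<in>{J..}. ?U j) \<in> null_sets lborel" for J
  proof -
    have ms: "(\<Inter>j\<in>{J..}. ?U j) \<in> sets lborel" by measurable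
    have lim: "(\<lambda>j. ennreal (8 / (real j + 1)^2)) \<longlonglongrightarrow> ennreal 0"
    proof (rule tendsto_ennrealI)
      have "(\<lambda>j. 8 / (real j + 1)^2) = (\<lambda>j. 8 * (1 / real (Suc j))^2)" by (simp add: power_divide add.commute)
      moreover have "(\<lambda>j. 8 * (1 / real (Suc j))^2) \<longlonglongrightarrow> 8 * 0^2"
        by (intro tendsto_intros LIMSEQ_Suc[OF lim_inverse_n'])
      ultimately show "(\<lambda>j. 8 / (real j + 1)^2) \<longlonglongrightarrow> 0" by simp
    qed
    have "emeasure lborel (\<Inter>j\<in>{J..}. ?U j) \<le> ennreal 0"
    proof (rule LIMSEQ_le_const[OF lim])
      show "\<exists>N. \<forall>n\<ge>N. emeasure lborel (\<Inter>j\<in>{J..}. ?U j) \<le> ennreal (8 / (real n + 1)^2)"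
      proof (intro exI allI impI)
        fix n assume "J \<le> n"
        then have "emeasure lborel (\<Inter>j\<in>{J..}. ?U j) \<le> emeasure lborel (?U n)"
          by (intro emeasure_mono) auto
        then show "emeasure lborel (\<Inter>j\<in>{J..}. ?U j) \<le> ennreal (8 / (real n + 1)^2)"
          using bound[of n] by (rule order_trans)
      qed
    qed
    then show ?thesis using ms by auto
  qed
  then show ?thesis by (intro null_sets_UN) auto
qed

theorem theorem8p1:
  fixes \<alpha> :: real
  assumes "\<alpha> \<in> {0..1}" and "\<alpha> \<notin> \<rat>"
  shows "\<exists>S \<subseteq> {0..1}. {0..1} - S \<in> null_sets lborel \<and>
    (\<forall>\<beta>\<in>S. \<beta> \<notin> \<rat> \<and>
      (\<exists>n :: nat \<Rightarrow> nat.
        ((\<forall>j. n j \<ge> 1 \<and> cf_sigma_ex (cf_denom \<alpha>) (cf_denom \<beta>) (n j)) \<and>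
         filterlim (\<lambda>j. cf_M (cf_denom \<alpha>) (cf_denom \<beta>) (n j)) at_top sequentially)
      \<or> ((\<forall>j. n j \<ge> 1 \<and> cf_sigma_ex (cf_denom \<beta>) (cf_denom \<alpha>) (n j)) \<and>
         filterlim (\<lambda>j. cf_M (cf_denom \<beta>) (cf_denom \<alpha>) (n j)) at_top sequentially)))"
proof -
  have irra: "\<alpha> \<notin> \<rat>" by (rule assms(2))
  have "\<alpha> \<noteq> 0" "\<alpha> \<noteq> 1" using irra by auto
  then have a: "0 < \<alpha>" "\<alpha> < 1" using assms(1) by auto
  have Qnull: "{0..1} \<inter> \<rat> \<in> null_sets lborel"
    by (rule countable_imp_null_set_lborel) (rule countable_subset[OF _ countable_rat], auto)
  have unit: "0 < \<beta>" "\<beta> < 1" if "\<beta> \<in> {0..1}" "\<beta> \<notin> \<rat>" for \<beta> :: real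
  proof -
    have "\<beta> \<noteq> 0" "\<beta> \<noteq> 1" using that by auto
    then show "0 < \<beta>" "\<beta> < 1" using that by auto
  qed
  show ?thesis
  proof (cases "\<exists>C. \<forall>r\<ge>1. cf_digit \<alpha> r \<le> C")
    case True
    then obtain C where C: "\<And>r. r \<ge> 1 \<Longrightarrow> cf_digit \<alpha> r \<le> C" by blast
    define Z1 where "Z1 = (\<Union>B. {y \<in> {0..1}. Tg y \<in> Bad B})"
    have Z1n: "Z1 \<in> null_sets lborel" unfolding Z1_def
      by (intro null_sets_UN preimage_null Bad_sets W_Bad)
    define S where "S = {0..1} - (Z1 \<union> \<rat>)"
    have comp: "{0..1} - S = ({0..1} \<inter> Z1) \<union> ({0..1} \<inter> \<rat>)" unfolding S_def by auto
    have "{0..1} - S \<in> null_sets lborel" unfolding comp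
      by (rule null_sets.Un[OF null_set_Int1[OF Z1n] Qnull]) simp
    moreover have "\<forall>\<beta>\<in>S. \<beta> \<notin> \<rat> \<and> (\<exists>n :: nat \<Rightarrow> nat.
        ((\<forall>j. n j \<ge> 1 \<and> cf_sigma_ex (cf_denom \<alpha>) (cf_denom \<beta>) (n j)) \<and>
         filterlim (\<lambda>j. cf_M (cf_denom \<alpha>) (cf_denom \<beta>) (n j)) at_top sequentially)
      \<or> ((\<forall>j. n j \<ge> 1 \<and> cf_sigma_ex (cf_denom \<beta>) (cf_denom \<alpha>) (n j)) \<and>
         filterlim (\<lambda>j. cf_M (cf_denom \<beta>) (cf_denom \<alpha>) (n j)) at_top sequentially))"
    proof
      fix \<beta> assume b: "\<beta> \<in> S"
      then have b01: "\<beta> \<in> {0..1}" and irrb: "\<beta> \<notin> \<rat>" and nz: "\<beta> \<notin> Z1" unfolding S_def by auto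
      have nb: "Tg \<beta> \<notin> Bad B" for B using nz b01 unfolding Z1_def by blast
      from case1[OF irra a C irrb unit[OF b01 irrb] nb] show "\<beta> \<notin> \<rat> \<and> (\<exists>n :: nat \<Rightarrow> nat.
        ((\<forall>j. n j \<ge> 1 \<and> cf_sigma_ex (cf_denom \<alpha>) (cf_denom \<beta>) (n j)) \<and>
         filterlim (\<lambda>j. cf_M (cf_denom \<alpha>) (cf_denom \<beta>) (n j)) at_top sequentially)
      \<or> ((\<forall>j. n j \<ge> 1 \<and> cf_sigma_ex (cf_denom \<beta>) (cf_denom \<alpha>) (n j)) \<and>
         filterlim (\<lambda>j. cf_M (cf_denom \<beta>) (cf_denom \<alpha>) (n j)) at_top sequentially))"
        using irrb by blast
    qed
    moreover have "S \<subseteq> {0..1}" unfolding S_def by auto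
    ultimately show ?thesis by blast
  next
    case False
    then have unb: "\<exists>r\<ge>1. cf_digit \<alpha> r > C" for C by (metis not_le)
    have "\<exists>r. r \<ge> 1 \<and> cf_digit \<alpha> (Suc r) \<ge> (real j + 1)^4" for j
    proof -
      obtain m where m: "m \<ge> 1" "cf_digit \<alpha> m > max (cf_digit \<alpha> 1) ((real j + 1)^4)"
        using unb by blast
      have "m \<noteq> 1" using m(2) by auto
      then obtain r where "m = Suc r" "r \<ge> 1" using m(1) by (cases m) auto
      then show ?thesis using m(2) by (intro exI[of _ r]) auto
    qed
    then obtain rr where rr: "\<And>j. rr j \<ge> 1 \<and> cf_digit \<alpha> (Suc (rr j)) \<ge> (real j + 1)^4" by metis
    define Z2 where "Z2 = (\<Union>J. \<Inter>j\<in>{J..}. Ucov (cf_denom \<alpha> (rr j)) (cf_denom \<alpha> (Suc (rr j))) (real j + 1))"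
    have Z2n: "Z2 \<in> null_sets lborel" unfolding Z2_def by (rule Z2_null[OF irra rr])
    define S where "S = {0..1} - (Z2 \<union> \<rat>)"
    have comp: "{0..1} - S = ({0..1} \<inter> Z2) \<union> ({0..1} \<inter> \<rat>)" unfolding S_def by auto
    have "{0..1} - S \<in> null_sets lborel" unfolding comp
      by (rule null_sets.Un[OF null_set_Int1[OF Z2n] Qnull]) simp
    moreover have "\<forall>\<beta>\<in>S. \<beta> \<notin> \<rat> \<and> (\<exists>n :: nat \<Rightarrow> nat.
        ((\<forall>j. n j \<ge> 1 \<and> cf_sigma_ex (cf_denom \<alpha>) (cf_denom \<beta>) (n j)) \<and>
         filterlim (\<lambda>j. cf_M (cf_denom \<alpha>) (cf_denom \<beta>) (n j)) at_top sequentially)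
      \<or> ((\<forall>j. n j \<ge> 1 \<and> cf_sigma_ex (cf_denom \<beta>) (cf_denom \<alpha>) (n j)) \<and>
         filterlim (\<lambda>j. cf_M (cf_denom \<beta>) (cf_denom \<alpha>) (n j)) at_top sequentially))"
    proof
      fix \<beta> assume b: "\<beta> \<in> S"
      then have b01: "\<beta> \<in> {0..1}" and irrb: "\<beta> \<notin> \<rat>" and nz: "\<beta> \<notin> Z2" unfolding S_def by auto
      from case2[OF irra a rr irrb unit[OF b01 irrb] nz[unfolded Z2_def]] show "\<beta> \<notin> \<rat> \<and> (\<exists>n :: nat \<Rightarrow> nat.
        ((\<forall>j. n j \<ge> 1 \<and> cf_sigma_ex (cf_denom \<alpha>) (cf_denom \<beta>) (n j)) \<and>
         filterlim (\<lambda>j. cf_M (cf_denom \<alpha>) (cf_denom \<beta>) (n j)) at_top sequentially)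
      \<or> ((\<forall>j. n j \<ge> 1 \<and> cf_sigma_ex (cf_denom \<beta>) (cf_denom \<alpha>) (n j)) \<and>
         filterlim (\<lambda>j. cf_M (cf_denom \<beta>) (cf_denom \<alpha>) (n j)) at_top sequentially))"
        using irrb by blast
    qed
    moreover have "S \<subseteq> {0..1}" unfolding S_def by auto
    ultimately show ?thesis by blast
  qed
qed

end
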